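(* Let $n$ and $k$ be nonnegative integers with $k\le n$. Then $$\sum_{m=k}^{n}\binom{n}{m}\binom{m+2k}{3k}(-1)^{m-k}=(-1)^{n-k}\binom{2k}{n-k}.$$
   Context: Binomial coefficients $\binom{a}{b}$ for nonnegative integers $a,b$ are the usual ones, with $\binom{a}{b}=0$ when $b>a$. *)

theory Defs
  imports Main
begin

end

theory Submission
  imports Defs
begin

definition D :: "nat \<Rightarrow> (nat \<Rightarrow> int) \<Rightarrow> int" where
  "D n g = (\<Sum>m\<le>n. int (n choose m) * (-1) ^ (n - m) * g m)"

lemma D_Suc: "D (Suc n) g = D n (\<lambda>m. g (Suc m) - g m)"
proof -
  have "D (Suc n) g = (\<Sum>m\<le>Suc n. int (n choose m) * (-1) ^ (Suc n - m) * g m)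
        + (\<Sum>m\<le>Suc n. (if m = 0 then 0 else int (n choose (m - 1))) * (-1) ^ (Suc n - m) * g m)"
    unfolding D_def
  proof (subst sum.distrib[symmetric], rule sum.cong)
    fix x assume "x \<in> {..Suc n}"
    show "int (Suc n choose x) * (-1) ^ (Suc n - x) * g x =
      int (n choose x) * (-1) ^ (Suc n - x) * g x +
      (if x = 0 then 0 else int (n choose (x - 1))) * (-1) ^ (Suc n - x) * g x"
    proof (cases x)
      case (Suc j)
      then show ?thesis by (simp add: algebra_simps)
    qed simp
  qed simp
  also have "(\<Sum>m\<le>Suc n. int (n choose m) * (-1) ^ (Suc n - m) * g m)
      = - (\<Sum>m\<le>n. int (n choose m) * (-1) ^ (n - m) * g m)"
    by (simp add: sum_negf[symmetric] Suc_diff_le)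
  also have "(\<Sum>m\<le>Suc n. (if m = 0 then 0 else int (n choose (m - 1))) * (-1) ^ (Suc n - m) * g m)
      = (\<Sum>m\<le>n. int (n choose m) * (-1) ^ (n - m) * g (Suc m))"
    by (subst sum.atMost_Suc_shift) simp
  finally show ?thesis unfolding D_def
    by (simp add: sum_subtractf[symmetric] algebra_simps)
qed

lemma D_zero: "D n (\<lambda>m. 0) = 0"
  by (simp add: D_def)

lemma D_choose: "D n (\<lambda>m. int ((m + x) choose b)) = (if n \<le> b then int (x choose (b - n)) else 0)"
proof (induction n arbitrary: b)
  case 0
  then show ?case by (simp add: D_def)
next
  case (Suc n)
  show ?case
  proof (cases b)
    case 0
    then show ?thesis by (simp add: D_Suc D_zero)
  next
    case (Suc c)
    have "D (Suc n) (\<lambda>m. int ((m + x) choose b)) = D n (\<lambda>m. int ((m + x) choose c))"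
      unfolding D_Suc Suc by (simp add: binomial_Suc_Suc)
    then show ?thesis using Suc.IH[of c] Suc by simp
  qed
qed

theorem lemma4p1:
  fixes n k :: nat
  assumes "k \<le> n"
  shows "(\<Sum>m=k..n. int (n choose m) * int ((m + 2*k) choose (3*k)) * (-1) ^ (m - k))
         = (-1) ^ (n - k) * int ((2*k) choose (n - k))"
proof -
  have "(\<Sum>m=k..n. int (n choose m) * int ((m + 2*k) choose (3*k)) * (-1) ^ (m - k))
      = (\<Sum>m\<le>n. (-1) ^ (n - k) * (int (n choose m) * (-1) ^ (n - m) * int ((m + 2*k) choose (3*k))))"
  proof -
    have "(\<Sum>m\<le>n. (-1) ^ (n - k) * (int (n choose m) * (-1) ^ (n - m) * int ((m + 2*k) choose (3*k))))
        = (\<Sum>m=k..n. (-1) ^ (n - k) * (int (n choose m) * (-1) ^ (n - m) * int ((m + 2*k) choose (3*k))))"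
      by (rule sum.mono_neutral_right) auto
    also have "\<dots> = (\<Sum>m=k..n. int (n choose m) * int ((m + 2*k) choose (3*k)) * (-1) ^ (m - k))"
    proof (rule sum.cong)
      fix m assume "m \<in> {k..n}"
      then have "n - k = (n - m) + (m - k)" by auto
      then have "(-1::int) ^ (n - k) * (-1) ^ (n - m) = (-1) ^ (m - k) * ((-1) ^ (n - m))^2"
        by (simp add: power_add power2_eq_square)
      moreover have "((-1::int) ^ (n - m))^2 = 1"
        by (metis power_mult_distrib power_one mult_minus1 power2_minus power_one_right one_power2 minus_one_mult_self power2_eq_square)
      ultimately have "(-1::int) ^ (n - k) * (-1) ^ (n - m) = (-1) ^ (m - k)" by simp
      then show "(-1) ^ (n - k) * (int (n choose m) * (-1) ^ (n - m) * int ((m + 2*k) choose (3*k)))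
          = int (n choose m) * int ((m + 2*k) choose (3*k)) * (-1) ^ (m - k)"
        by (metis mult.commute mult.left_commute)
    qed simp
    finally show ?thesis by simp
  qed
  also have "\<dots> = (-1) ^ (n - k) * D n (\<lambda>m. int ((m + 2*k) choose (3*k)))"
    by (simp add: D_def sum_distrib_left)
  also have "\<dots> = (-1) ^ (n - k) * int ((2*k) choose (n - k))"
  proof (cases "n \<le> 3*k")
    case True
    have "(2*k) choose (3*k - n) = (2*k) choose (2*k - (3*k - n))"
      by (rule binomial_symmetric) (use assms in auto)
    moreover have "2*k - (3*k - n) = n - k" using True assms by auto
    ultimately show ?thesis using True by (simp add: D_choose)
  next
    case False
    then show ?thesis by (simp add: D_choose)
  qed
  finally show ?thesis .
qed

end
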